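(* For every integer $n\ge 7$, the wheel $W_{1,n}$ satisfies $$\dim_{n\ell}(W_{1,n})=\left\lfloor \frac{2n}{5}\right\rfloor.$$
   Context: The wheel $W_{1,n}=K_1+C_n$ is obtained from the cycle $C_n$ by adding one vertex (the center) adjacent to all cycle vertices. $d(u,v)$ is the shortest-path distance. A set $X$ of vertices resolves two vertices $u,v$ if some $x\in X$ satisfies $d(u,x)\neq d(v,x)$. $X$ is a nonlocal resolving set if it resolves every pair of distinct non-adjacent vertices; the nonlocal metric dimension $\dim_{n\ell}$ is the minimum size of a nonlocal resolving set. *)

theory Defs
  imports Main
begin

text \<open>A (simple, undirected) graph is given by a vertex set V and a symmetric
irreflexive adjacency relation E on V.\<close>

inductive walk_len :: "'a set \<Rightarrow> ('a \<Rightarrow> 'a \<Rightarrow> bool) \<Rightarrow> nat \<Rightarrow> 'a \<Rightarrow> 'a \<Rightarrow> bool"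
  for V E where
  walk0: "u \<in> V \<Longrightarrow> walk_len V E 0 u u"
| walkS: "u \<in> V \<Longrightarrow> E u w \<Longrightarrow> walk_len V E k w v \<Longrightarrow> walk_len V E (Suc k) u v"

text \<open>Shortest-path distance (used only for connected graphs).\<close>
definition gdist :: "'a set \<Rightarrow> ('a \<Rightarrow> 'a \<Rightarrow> bool) \<Rightarrow> 'a \<Rightarrow> 'a \<Rightarrow> nat" where
  "gdist V E u v = (LEAST k. walk_len V E k u v)"

definition resolves :: "'a set \<Rightarrow> ('a \<Rightarrow> 'a \<Rightarrow> bool) \<Rightarrow> 'a set \<Rightarrow> 'a \<Rightarrow> 'a \<Rightarrow> bool" where
  "resolves V E X u v \<longleftrightarrow> (\<exists>x\<in>X. gdist V E u x \<noteq> gdist V E v x)"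

definition nonlocal_resolving :: "'a set \<Rightarrow> ('a \<Rightarrow> 'a \<Rightarrow> bool) \<Rightarrow> 'a set \<Rightarrow> bool" where
  "nonlocal_resolving V E X \<longleftrightarrow> X \<subseteq> V \<and>
     (\<forall>u\<in>V. \<forall>v\<in>V. u \<noteq> v \<and> \<not> E u v \<longrightarrow> resolves V E X u v)"

definition nl_dim :: "'a set \<Rightarrow> ('a \<Rightarrow> 'a \<Rightarrow> bool) \<Rightarrow> nat" where
  "nl_dim V E = (LEAST k. \<exists>X. nonlocal_resolving V E X \<and> finite X \<and> card X = k)"

text \<open>The wheel W_{1,n}: vertex 0 is the center, vertices 1..n form the cycle C_n
(i adjacent to i+1, and n adjacent to 1).\<close>
definition wheel_V :: "nat \<Rightarrow> nat set" where
  "wheel_V n = {0..n}"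

definition wheel_E :: "nat \<Rightarrow> nat \<Rightarrow> nat \<Rightarrow> bool" where
  "wheel_E n u v \<longleftrightarrow> u \<in> {0..n} \<and> v \<in> {0..n} \<and> u \<noteq> v \<and>
     (u = 0 \<or> v = 0 \<or> v = u + 1 \<or> u = v + 1 \<or> (u = 1 \<and> v = n) \<or> (u = n \<and> v = 1))"

end

theory Submission
  imports Defs
begin

lemma walk0_iff: "walk_len V E 0 u v \<longleftrightarrow> u = v \<and> u \<in> V"
  by (auto elim: walk_len.cases intro: walk_len.intros)

lemma walk1_E: "walk_len V E (Suc 0) u v \<Longrightarrow> E u v"
  by (auto elim!: walk_len.cases)

lemma wE_0: "v \<in> {1..n} \<Longrightarrow> wheel_E n v 0 \<and> wheel_E n 0 v"
  unfolding wheel_E_def by auto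

lemma gdist_wheel:
  assumes "u \<in> wheel_V n" "v \<in> wheel_V n"
  shows "gdist (wheel_V n) (wheel_E n) u v =
     (if u = v then 0 else if wheel_E n u v then 1 else 2)"
proof -
  let ?V = "wheel_V n" and ?E = "wheel_E n"
  show ?thesis
  proof (cases "u = v")
    case True
    then show ?thesis unfolding gdist_def using assms
      by (auto simp: walk0_iff intro!: Least_equality)
  next
    case F: False
    show ?thesis
    proof (cases "?E u v")
      case True
      have w: "walk_len ?V ?E 1 u v"
        using assms True by (auto intro!: walk_len.intros)
      have "(LEAST k. walk_len ?V ?E k u v) = 1"
        apply (rule Least_equality)
        using w F apply simp
        by (metis F One_nat_def less_one not_le walk0_iff)
      then show ?thesis using F True unfolding gdist_def by simp
    next
      case False
      have u0: "u \<noteq> 0" using False F assms unfolding wheel_E_def wheel_V_def by auto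
      have v0: "v \<noteq> 0" using False F assms unfolding wheel_E_def wheel_V_def by auto
      have w: "walk_len ?V ?E 2 u v"
      proof -
        have "walk_len ?V ?E 0 v v" using assms by (simp add: walk_len.walk0)
        then have "walk_len ?V ?E 1 0 v"
          using wE_0[of v n] assms v0 by (auto simp: wheel_V_def intro: walk_len.walkS)
        then show ?thesis
          using wE_0[of u n] assms u0 by (auto simp: wheel_V_def numeral_2_eq_2 intro: walk_len.walkS)
      qed
      have "(LEAST k. walk_len ?V ?E k u v) = 2"
      proof (rule Least_equality)
        show "walk_len ?V ?E 2 u v" by (rule w)
        fix k assume k: "walk_len ?V ?E k u v"
        show "2 \<le> k"
        proof (rule ccontr)
          assume "\<not> 2 \<le> k"
          then have "k = 0 \<or> k = Suc 0" by auto
          then show False using k F False walk0_iff walk1_E by metis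
        qed
      qed
      then show ?thesis using F False unfolding gdist_def by simp
    qed
  qed
qed

lemma tri:
  assumes "n \<ge> 4" "a \<in> {1..n}" "b \<in> {1..n}" "c \<in> {1..n}" "a \<noteq> b" "b \<noteq> c" "a \<noteq> c"
    "wheel_E n a b" "wheel_E n b c" "wheel_E n a c"
  shows False
  using assms unfolding wheel_E_def by auto

lemma pairwise_le2:
  assumes "finite S" "\<And>a b c. a \<in> S \<Longrightarrow> b \<in> S \<Longrightarrow> c \<in> S \<Longrightarrow> a \<noteq> b \<Longrightarrow> b \<noteq> c \<Longrightarrow> a \<noteq> c \<Longrightarrow> False"
  shows "card S \<le> 2"
proof (rule ccontr)
  assume "\<not> card S \<le> 2"
  then have "3 \<le> card S" by simp
  then obtain T where "T \<subseteq> S" "card T = 3" by (rule obtain_subset_with_card_n)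
  then obtain x y z where "T = {x,y,z}" "x \<noteq> y" "y \<noteq> z" "x \<noteq> z" by (auto simp: card_3_iff)
  then show False using assms(2)[of x y z] \<open>T \<subseteq> S\<close> by auto
qed

lemma nbr_le2:
  assumes "x \<in> {1..n}" "finite Y" "Y \<subseteq> {1..n}"
  shows "card {y\<in>Y. wheel_E n y x} \<le> 2"
proof -
  have "{y\<in>Y. wheel_E n y x} \<subseteq> {if x = 1 then n else x - 1, if x = n then 1 else x + 1}"
    using assms unfolding wheel_E_def by auto
  then have "card {y\<in>Y. wheel_E n y x} \<le> card {if x = 1 then n else x - 1, if x = n then 1 else x + 1}"
    by (intro card_mono) auto
  also have "\<dots> \<le> 2" by (simp add: card_insert_le_m1)
  finally show ?thesis .
qed

lemma cnt: "finite A \<Longrightarrow> card {x\<in>A. P x} = (\<Sum>x\<in>A. if P x then 1 else 0)"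
  by (simp add: sum.If_cases Int_def conj_commute)

lemma lower:
  assumes n7: "n \<ge> 7" and R: "nonlocal_resolving (wheel_V n) (wheel_E n) X" and fX: "finite X"
  shows "2 * n div 5 \<le> card X"
proof -
  let ?V = "wheel_V n" and ?E = "wheel_E n"
  define C where "C = {1..n::nat}"
  define X' where "X' = X \<inter> C"
  define k where "k = card X'"
  define Y where "Y = C - X'"
  define tr where "tr y = {x\<in>X'. ?E y x}" for y
  have fC: "finite C" unfolding C_def by simp
  have fX': "finite X'" unfolding X'_def using fX by simp
  have fY: "finite Y" unfolding Y_def using fC by simp
  have XC: "X' \<subseteq> C" unfolding X'_def by auto
  have YC: "Y \<subseteq> C" unfolding Y_def by auto
  have kX: "k \<le> card X" unfolding k_def X'_def using fX by (simp add: card_mono)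
  have cY: "card Y = n - k" unfolding Y_def k_def using XC fC
    by (simp add: card_Diff_subset finite_subset C_def)
  have kn: "k \<le> n" unfolding k_def using card_mono[OF fC XC] by (simp add: C_def)
  have dist: "gdist ?V ?E u v = (if u = v then 0 else if ?E u v then 1 else 2)"
    if "u \<in> ?V" "v \<in> ?V" for u v using gdist_wheel that by blast
  have sep: "tr y1 \<noteq> tr y2" if y: "y1 \<in> Y" "y2 \<in> Y" "y1 \<noteq> y2" "\<not> ?E y1 y2" for y1 y2
  proof -
    have yV: "y1 \<in> ?V" "y2 \<in> ?V" using y YC unfolding C_def wheel_V_def by auto
    have "resolves ?V ?E X y1 y2" using R yV y(3,4) unfolding nonlocal_resolving_def by blast
    then obtain x where x: "x \<in> X" "gdist ?V ?E y1 x \<noteq> gdist ?V ?E y2 x"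
      unfolding resolves_def by blast
    have xV: "x \<in> ?V" using R x unfolding nonlocal_resolving_def by auto
    have y1X: "y1 \<notin> X" "y2 \<notin> X" using y unfolding Y_def X'_def by auto
    have yC: "y1 \<in> C" "y2 \<in> C" using y YC by auto
    have x0: "x \<noteq> 0"
    proof
      assume "x = 0"
      then have "?E y1 x" "?E y2 x" using wE_0 yC unfolding C_def by auto
      then show False using x(2) dist[OF yV(1) xV] dist[OF yV(2) xV] \<open>x = 0\<close> yC
        unfolding C_def by auto
    qed
    have xX': "x \<in> X'" using x x0 xV unfolding X'_def C_def wheel_V_def by auto
    have "x \<noteq> y1" "x \<noteq> y2" using y1X x by auto
    then have "?E y1 x \<noteq> ?E y2 x" using x(2) dist[OF yV(1) xV] dist[OF yV(2) xV] by (auto split: if_splits)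
    then show ?thesis using xX' unfolding tr_def by auto
  qed
  define f where "f y = card (tr y)" for y
  define Y0 where "Y0 = {y\<in>Y. f y = 0}"
  define Y1 where "Y1 = {y\<in>Y. f y = 1}"
  have trfin: "finite (tr y)" for y unfolding tr_def using fX' by simp
  have Y0: "card Y0 \<le> 2"
  proof (rule pairwise_le2)
    show "finite Y0" unfolding Y0_def using fY by simp
    fix a b c assume abc: "a \<in> Y0" "b \<in> Y0" "c \<in> Y0" "a \<noteq> b" "b \<noteq> c" "a \<noteq> c"
    have e: "tr a = {}" "tr b = {}" "tr c = {}" using abc trfin unfolding Y0_def f_def by auto
    have "?E a b" "?E b c" "?E a c" using sep[of a b] sep[of b c] sep[of a c] abc e unfolding Y0_def by auto
    moreover have "a \<in> C" "b \<in> C" "c \<in> C" using abc YC unfolding Y0_def by auto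
    ultimately show False using tri[of n a b c] abc n7 unfolding C_def by auto
  qed
  have Y1: "card Y1 \<le> k"
  proof -
    define g where "g y = the_elem (tr y)" for y
    have single: "tr y = {g y}" if "y \<in> Y1" for y
      using that trfin unfolding Y1_def f_def g_def by (auto simp: card_1_singleton_iff)
    have "inj_on g Y1"
    proof (rule inj_onI)
      fix a b assume ab: "a \<in> Y1" "b \<in> Y1" "g a = g b"
      show "a = b"
      proof (rule ccontr)
        assume ne: "a \<noteq> b"
        have "tr a = tr b" using single ab by metis
        then have Eab: "?E a b" using sep ne ab unfolding Y1_def by auto
        have "g a \<in> tr a" "g a \<in> tr b" using single ab by auto
        then have "g a \<in> X'" "?E a (g a)" "?E b (g a)" unfolding tr_def by auto
        moreover have "a \<notin> X'" "b \<notin> X'" using ab unfolding Y1_def Y_def by auto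
        moreover have "?E (g a) b" using \<open>?E b (g a)\<close> unfolding wheel_E_def by auto
        moreover have "a \<in> C" "b \<in> C" "g a \<in> C" using ab YC XC \<open>g a \<in> X'\<close> unfolding Y1_def by auto
        ultimately have "a \<noteq> g a" "g a \<noteq> b" "a \<in> {1..n}" "b \<in> {1..n}" "g a \<in> {1..n}"
          "wheel_E n a (g a)" "wheel_E n (g a) b"
          unfolding C_def by metis+
        then show False using tri[of n a "g a" b] n7 Eab ne by linarith
      qed
    qed
    moreover have "g ` Y1 \<subseteq> X'" using single unfolding tr_def by blast
    ultimately show ?thesis unfolding k_def using fX' by (simp add: card_inj_on_le)
  qed
  have S: "(\<Sum>y\<in>Y. f y) \<le> 2 * k"
  proof -
    have "(\<Sum>y\<in>Y. f y) = (\<Sum>y\<in>Y. \<Sum>x\<in>X'. if ?E y x then 1 else 0)"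
      unfolding f_def tr_def using fX' by (simp add: cnt)
    also have "\<dots> = (\<Sum>x\<in>X'. \<Sum>y\<in>Y. if ?E y x then 1 else 0)" by (rule sum.swap)
    also have "\<dots> = (\<Sum>x\<in>X'. card {y\<in>Y. ?E y x})"
      using fY by (simp add: cnt)
    also have "\<dots> \<le> (\<Sum>x\<in>X'. 2)"
      by (rule sum_mono) (use nbr_le2 XC fY YC C_def in auto)
    finally show ?thesis unfolding k_def by simp
  qed
  have "2 * card Y = (\<Sum>y\<in>Y. 2::nat)" by simp
  also have "\<dots> \<le> (\<Sum>y\<in>Y. f y + (if f y = 1 then 1 else 0) + 2 * (if f y = 0 then 1 else 0))"
    by (rule sum_mono) auto
  also have "\<dots> = (\<Sum>y\<in>Y. f y) + card Y1 + 2 * card Y0"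
    unfolding Y0_def Y1_def using fY by (simp add: sum.distrib sum_distrib_left[symmetric] cnt)
  finally have "2 * card Y \<le> (\<Sum>y\<in>Y. f y) + card Y1 + 2 * card Y0" .
  with S Y0 Y1 cY kn have "2 * n \<le> 5 * k + 4" by linarith
  then have "2 * n div 5 \<le> (5 * k + 4) div 5" by (rule div_le_mono)
  also have "\<dots> = k" by simp
  finally show ?thesis using kX by linarith
qed



lemma dec5: "(x::nat) = 5 * (x div 5) + x mod 5" by simp

lemma five: "\<exists>q. (x::nat) = 5*q \<or> x = 5*q+1 \<or> x = 5*q+2 \<or> x = 5*q+3 \<or> x = 5*q+4"
proof -
  have "x mod 5 < 5" by simp
  then have "x mod 5 = 0 \<or> x mod 5 = 1 \<or> x mod 5 = 2 \<or> x mod 5 = 3 \<or> x mod 5 = 4" by linarith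
  then show ?thesis
  proof (elim disjE)
    assume "x mod 5 = 0" then have "x = 5 * (x div 5)" using dec5[of x] by linarith
    then show ?thesis by blast
  next
    assume "x mod 5 = 1" then have "x = 5 * (x div 5) + 1" using dec5[of x] by linarith
    then show ?thesis by blast
  next
    assume "x mod 5 = 2" then have "x = 5 * (x div 5) + 2" using dec5[of x] by linarith
    then show ?thesis by blast
  next
    assume "x mod 5 = 3" then have "x = 5 * (x div 5) + 3" using dec5[of x] by linarith
    then show ?thesis by blast
  next
    assume "x mod 5 = 4" then have "x = 5 * (x div 5) + 4" using dec5[of x] by linarith
    then show ?thesis by blast
  qed
qed

definition S5 :: "nat \<Rightarrow> nat set" where
  "S5 m = {i\<in>{1..m}. i mod 5 = 0 \<or> i mod 5 = 3}"

definition Xs :: "nat \<Rightarrow> nat set" where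
  "Xs n = (if n mod 5 = 0 then S5 n else insert (n - 2) (S5 (n - 2)))"

lemma ar0: "Suc m div 5 + Suc (Suc (Suc m)) div 5 = m div 5 + Suc (Suc m) div 5 + (if Suc m mod 5 = 0 \<or> Suc m mod 5 = 3 then 1 else (0::nat))"
proof -
  have "m mod 5 < 5" by simp
  then have "m mod 5 = 0 \<or> m mod 5 = 1 \<or> m mod 5 = 2 \<or> m mod 5 = 3 \<or> m mod 5 = 4" by linarith
  then show ?thesis by (elim disjE) (simp_all add: div_Suc mod_Suc)
qed

lemma card_S5: "card (S5 m) = m div 5 + (m + 2) div 5"
proof (induction m)
  case 0
  then show ?case by (simp add: S5_def)
next
  case (Suc m)
  have nin: "Suc m \<notin> S5 m" unfolding S5_def by auto
  have fin: "finite (S5 m)" unfolding S5_def by simp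
  have e2: "Suc m + 2 = Suc (Suc (Suc m))" "m + 2 = Suc (Suc m)" by simp_all
  show ?case
  proof (cases "Suc m mod 5 = 0 \<or> Suc m mod 5 = 3")
    case True
    then have eq: "S5 (Suc m) = insert (Suc m) (S5 m)"
      unfolding S5_def by (auto simp: le_Suc_eq)
    show ?thesis unfolding eq e2 using Suc.IH nin fin ar0[of m] True by (simp add: e2)
  next
    case False
    then have eq: "S5 (Suc m) = S5 m"
      unfolding S5_def by (auto simp: le_Suc_eq)
    show ?thesis unfolding eq e2 using Suc.IH ar0[of m] False by (simp add: e2)
  qed
qed

lemma L5: "(5 * d + k) div 5 = d + k div (5::nat)" by simp

lemma arA:
  assumes "w mod 5 \<noteq> 3"
  shows "w div 5 + (w + 2) div 5 + (if w mod 5 = 0 then 0 else 1) = (2 * w + 4) div (5::nat)"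
proof -
  define d where "d = w div 5"
  define r where "r = w mod 5"
  have w: "w = 5 * d + r" unfolding d_def r_def by simp
  have r5: "r < 5" unfolding r_def by simp
  have e0: "w div 5 = d + r div 5" using L5[of d r] w by simp
  have e1: "(w + 2) div 5 = d + (r + 2) div 5"
  proof -
    have "w + 2 = 5 * d + (r + 2)" using w by simp
    then show ?thesis using L5[of d "r + 2"] by simp
  qed
  have e2: "(2 * w + 4) div 5 = 2 * d + (2 * r + 4) div 5"
  proof -
    have "2 * w + 4 = 5 * (2 * d) + (2 * r + 4)" using w by simp
    then show ?thesis using L5[of "2 * d" "2 * r + 4"] by simp
  qed
  have "r = 0 \<or> r = 1 \<or> r = 2 \<or> r = 4" using r5 assms unfolding r_def by auto
  then show ?thesis unfolding e0 e1 e2 r_def[symmetric] by (elim disjE) simp_all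
qed

lemma card_Xs:
  assumes n7: "n \<ge> 7"
  shows "card (Xs n) = 2 * n div 5"
proof (cases "n mod 5 = 0")
  case True
  then obtain q' where "n = 5 * q'" by auto
  then show ?thesis using True by (simp add: Xs_def card_S5)
next
  case False
  define w where "w = n - 2"
  have nw: "n = w + 2" unfolding w_def using n7 by simp
  have w3: "w mod 5 \<noteq> 3"
  proof
    assume "w mod 5 = 3"
    then have "(w + 2) mod 5 = 0" by (simp add: mod_Suc)
    then show False using False nw by simp
  qed
  have fin: "finite (S5 w)" unfolding S5_def by simp
  have mem: "w \<in> S5 w \<longleftrightarrow> w mod 5 = 0"
    using n7 w3 unfolding S5_def w_def by auto
  have "card (Xs n) = card (insert w (S5 w))" using False unfolding Xs_def w_def by simp
  also have "\<dots> = w div 5 + (w + 2) div 5 + (if w mod 5 = 0 then 0 else 1)"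
    using fin mem by (simp add: card_insert_if card_S5)
  also have "\<dots> = (2 * w + 4) div 5" using arA[OF w3] .
  also have "2 * w + 4 = 2 * n" using nw by simp
  finally show ?thesis .
qed

lemma Xs_sub: "n \<ge> 7 \<Longrightarrow> Xs n \<subseteq> {1..n}"
  unfolding Xs_def S5_def by auto

lemma mem1: "n \<ge> 7 \<Longrightarrow> 1 \<le> i \<Longrightarrow> i \<le> n - 2 \<Longrightarrow> i mod 5 = 0 \<or> i mod 5 = 3 \<Longrightarrow> i \<in> Xs n"
  unfolding Xs_def S5_def by auto

lemma h9: "(x::nat) mod 5 = 0 \<Longrightarrow> x \<ge> 7 \<Longrightarrow> (x - 2) mod 5 = 3"
proof -
  assume a: "x mod 5 = 0" "x \<ge> 7"
  obtain q where q: "x = 5 * q" using a by auto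
  have "q \<ge> 2" using a q by linarith
  then obtain p where "q = p + 2" by (metis add.commute le_add_diff_inverse)
  then show ?thesis using q by simp
qed

lemma mem2: "n \<ge> 7 \<Longrightarrow> n - 2 \<in> Xs n"
proof -
  assume n: "n \<ge> 7"
  show ?thesis
  proof (cases "n mod 5 = 0")
    case True
    then have "(n - 2) mod 5 = 3" using h9[OF True n] by simp
    then show ?thesis using True n unfolding Xs_def S5_def by auto
  qed (simp add: Xs_def)
qed

lemma mem3: "n \<ge> 7 \<Longrightarrow> n mod 5 = 0 \<Longrightarrow> n \<in> Xs n"
  unfolding Xs_def S5_def by auto


lemma hA: "(x::nat) mod 5 = 4 \<Longrightarrow> (x - 1) mod 5 = 3 \<and> x \<ge> 4 \<and> (x + 1) mod 5 = 0"
proof -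
  assume a: "x mod 5 = 4"
  obtain q where "x = 5 * q + 4" using dec5[of x] a by metis
  then show ?thesis by simp
qed

lemma hB: "(x::nat) mod 5 = 1 \<Longrightarrow> x \<ge> 2 \<Longrightarrow> (x - 1) mod 5 = 0 \<and> x \<ge> 6"
proof -
  assume a: "x mod 5 = 1" "x \<ge> 2"
  obtain q where q: "x = 5 * q + 1" using dec5[of x] a by metis
  then show ?thesis using a by (cases q) auto
qed

lemma hC: "(x::nat) mod 5 = 2 \<Longrightarrow> (x + 1) mod 5 = 3 \<and> (x + 2) mod 5 = 4 \<and> x \<ge> 2 \<and> (x \<ge> 3 \<longrightarrow> x \<ge> 7)"
proof -
  assume a: "x mod 5 = 2"
  obtain q where q: "x = 5 * q + 2" using dec5[of x] a by metis
  then show ?thesis by (cases q) auto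
qed

lemma nE4: "1 \<le> v - 1 \<Longrightarrow> v - 1 \<le> n \<Longrightarrow> u < (v::nat) \<Longrightarrow> 1 \<le> u \<Longrightarrow> v \<le> n \<Longrightarrow> v \<noteq> u + 1 \<Longrightarrow> u \<noteq> v - 2 \<Longrightarrow> \<not> wheel_E n u (v - 1)"
  unfolding wheel_E_def by auto

lemma witness:
  fixes n u v :: nat
  assumes n7: "n \<ge> 7" and u1: "1 \<le> u" and uv: "u < v" and vn: "v \<le> n"
    and uX: "u \<notin> Xs n" and vX: "v \<notin> Xs n" and nadj: "v \<noteq> u + 1" "\<not> (u = 1 \<and> v = n)"
  shows "\<exists>x\<in>Xs n. x \<noteq> u \<and> x \<noteq> v \<and> (wheel_E n u x \<noteq> wheel_E n v x)"
proof -
  have sub: "Xs n \<subseteq> {1..n}" using Xs_sub n7 .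
  have c1: ?thesis if a: "2 \<le> u" "u - 1 \<in> Xs n" "\<not> (u - 1 = 1 \<and> v = n)"
  proof -
    have "wheel_E n u (u - 1)" using a uv vn unfolding wheel_E_def by auto
    moreover have "\<not> wheel_E n v (u - 1)" using a uv vn unfolding wheel_E_def by auto
    ultimately show ?thesis using a uv by (intro bexI[of _ "u - 1"]) auto
  qed
  have c2: ?thesis if a: "u + 1 \<le> n" "u + 1 \<in> Xs n" "v \<noteq> u + 2"
  proof -
    have "wheel_E n u (u + 1)" using a uv u1 unfolding wheel_E_def by auto
    moreover have "\<not> wheel_E n v (u + 1)" using a uv u1 nadj(1) unfolding wheel_E_def by auto
    ultimately show ?thesis using a uv nadj(1) by (intro bexI[of _ "u + 1"]) auto
  qed
  have c3: ?thesis if a: "v < n" "v + 1 \<in> Xs n" "\<not> (u = 1 \<and> v + 1 = n)"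
  proof -
    have "wheel_E n v (v + 1)" using a uv u1 unfolding wheel_E_def by auto
    moreover have "\<not> wheel_E n u (v + 1)" using a uv u1 nadj(1) unfolding wheel_E_def by auto
    ultimately show ?thesis using a uv by (intro bexI[of _ "v + 1"]) auto
  qed
  have c4: ?thesis if "v - 1 \<in> Xs n" "u \<noteq> v - 2"
  proof -
    have v1: "1 \<le> v - 1" "v - 1 \<le> n" using that sub by auto
    have "wheel_E n v (v - 1)" using v1 vn unfolding wheel_E_def by auto
    moreover have "\<not> wheel_E n u (v - 1)" using nE4[OF v1 uv u1 vn nadj(1) that(2)] .
    ultimately show ?thesis using that uv nadj(1) by (intro bexI[of _ "v - 1"]) auto
  qed
  have m2: "n - 2 \<in> Xs n" using mem2 n7 .
  have m1: "i \<in> Xs n" if "1 \<le> i" "i \<le> n - 2" "i mod 5 = 0 \<or> i mod 5 = 3" for i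
    by (rule mem1[OF n7 that])
  have "u mod 5 < 5" by simp
  then have "u mod 5 = 4 \<or> u mod 5 = 1 \<or> u mod 5 = 2 \<or> (u mod 5 = 0 \<or> u mod 5 = 3)" by linarith
  then show ?thesis
  proof (elim disjE)
    assume r: "u mod 5 = 4"
    from hA[OF r] have "(u - 1) mod 5 = 3" "u \<ge> 4" by auto
    then have "u - 1 \<in> Xs n" using m1[of "u - 1"] uv vn by auto
    note tmp = this
    show ?thesis by (rule c1) (use tmp \<open>u \<ge> 4\<close> in auto)
  next
    assume r: "u mod 5 = 1"
    show ?thesis
    proof (cases "u \<ge> 2")
      case True
      from hB[OF r True] have "(u - 1) mod 5 = 0" "u \<ge> 6" by auto
      then have "u - 1 \<in> Xs n" using m1[of "u - 1"] uv vn by auto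
      note tmp = this
      show ?thesis by (rule c1) (use tmp \<open>u \<ge> 6\<close> in auto)
    next
      case False
      then have u: "u = 1" using u1 by auto
      have v3: "v \<ge> 3" "v \<le> n - 1" using u nadj uv vn by auto
      show ?thesis
      proof (cases "v = n - 1")
        case True
        note tmp = this
        have "v - 1 = n - 2" using tmp n7 by simp
        then have "v - 1 \<in> Xs n" using m2 by simp
        show ?thesis by (rule c4) (use \<open>v - 1 \<in> Xs n\<close> tmp u n7 in auto)
      next
        case False
        then have vn2: "v \<le> n - 2" using v3 by auto
        have vn3: "v \<noteq> n - 2" using vX m2 by auto
        have "1 \<le> v" using v3 by simp
        have "v mod 5 \<noteq> 0 \<and> v mod 5 \<noteq> 3" using m1[of v] vX vn2 \<open>1 \<le> v\<close> by metis
        moreover have "v mod 5 < 5" by simp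
        ultimately have "v mod 5 = 1 \<or> v mod 5 = 2 \<or> v mod 5 = 4" by linarith
        then show ?thesis
        proof (elim disjE)
          assume s: "v mod 5 = 1"
          from hB[OF s] v3 have "(v - 1) mod 5 = 0" "v \<ge> 6" by auto
          then have "v - 1 \<in> Xs n" using m1[of "v - 1"] vn2 by auto
          note tmp = this
          show ?thesis by (rule c4) (use tmp u \<open>v \<ge> 6\<close> in auto)
        next
          assume s: "v mod 5 = 2"
          from hC[OF s] v3 have "(v + 1) mod 5 = 3" "v \<ge> 7" by auto
          then have "v + 1 \<in> Xs n" using m1[of "v + 1"] vn2 vn3 by auto
          note tmp = this
          show ?thesis by (rule c3) (use tmp u vn2 vn3 n7 in auto)
        next
          assume s: "v mod 5 = 4"
          from hA[OF s] have "(v - 1) mod 5 = 3" "v \<ge> 4" by auto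
          then have "v - 1 \<in> Xs n" using m1[of "v - 1"] vn2 by auto
          note tmp = this
          show ?thesis by (rule c4) (use tmp u \<open>v \<ge> 4\<close> in auto)
        qed
      qed
    qed
  next
    assume r: "u mod 5 = 2"
    from hC[OF r] have r1: "(u + 1) mod 5 = 3" "(u + 2) mod 5 = 4" "u \<ge> 2" by auto
    show ?thesis
    proof (cases "u + 1 \<le> n - 2")
      case True
      then have ux: "u + 1 \<in> Xs n" using m1[of "u + 1"] r1 by auto
      show ?thesis
      proof (cases "v = u + 2")
        case False
        note tmp = this
        show ?thesis by (rule c2) (use tmp ux True nadj in auto)
      next
        case vu: True
        from hA[of v] r1 vu have v0: "(v + 1) mod 5 = 0" by auto
        show ?thesis
        proof (cases "v + 1 \<le> n - 2")
          case True
          then have "v + 1 \<in> Xs n" using m1[of "v + 1"] v0 by auto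
          note tmp = this
          show ?thesis by (rule c3) (use tmp True r1 n7 in auto)
        next
          case False
          have "v \<noteq> n - 2" using vX m2 by auto
          moreover have "v \<noteq> n" using vu uX m2 by auto
          ultimately have vv: "v = n - 1" using False vn by auto
          then have "n mod 5 = 0" using v0 n7 by auto
          then have "n \<in> Xs n" using mem3 n7 by auto
          note tmp = this
          show ?thesis by (rule c3) (use tmp vv n7 r1 in auto)
        qed
      qed
    next
      case False
      have "u \<noteq> n - 2" using uX m2 by auto
      then have "u = n - 1" using False uv vn by auto
      then show ?thesis using nadj uv vn by auto
    qed
  next
    assume r: "u mod 5 = 0"
    show ?thesis
    proof (cases "u \<le> n - 2")
      case True
      then show ?thesis using m1[of u] u1 r uX by auto
    next
      case False
      then have "u = n - 1" using uv vn by auto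
      then show ?thesis using nadj uv vn by auto
    qed
  next
    assume r: "u mod 5 = 3"
    show ?thesis
    proof (cases "u \<le> n - 2")
      case True
      then show ?thesis using m1[of u] u1 r uX by auto
    next
      case False
      then have "u = n - 1" using uv vn by auto
      then show ?thesis using nadj uv vn by auto
    qed
  qed
qed


lemma resolve_lt:
  assumes n7: "n \<ge> 7" and u1: "1 \<le> u" and uv: "u < v" and vn: "v \<le> n"
    and ne: "\<not> wheel_E n u v"
  shows "resolves (wheel_V n) (wheel_E n) (Xs n) u v"
proof -
  have uV: "u \<in> wheel_V n" and vV: "v \<in> wheel_V n" using uv vn unfolding wheel_V_def by auto
  have sub: "Xs n \<subseteq> wheel_V n" using Xs_sub[OF n7] unfolding wheel_V_def by auto
  show ?thesis
  proof (cases "u \<in> Xs n")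
    case True
    then show ?thesis unfolding resolves_def
      using gdist_wheel[OF uV uV] gdist_wheel[OF vV uV] uv by (intro bexI[of _ u]) auto
  next
    case uX: False
    show ?thesis
    proof (cases "v \<in> Xs n")
      case True
      then show ?thesis unfolding resolves_def
        using gdist_wheel[OF uV vV] gdist_wheel[OF vV vV] uv by (intro bexI[of _ v]) auto
    next
      case vX: False
      have nadj: "v \<noteq> u + 1" "\<not> (u = 1 \<and> v = n)" using ne u1 uv vn unfolding wheel_E_def by auto
      obtain x where x: "x \<in> Xs n" "x \<noteq> u" "x \<noteq> v" "wheel_E n u x \<noteq> wheel_E n v x"
        using witness[OF n7 u1 uv vn uX vX nadj] by blast
      have xV: "x \<in> wheel_V n" using x sub by auto
      show ?thesis unfolding resolves_def
        using gdist_wheel[OF uV xV] gdist_wheel[OF vV xV] x by (intro bexI[of _ x]) auto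
    qed
  qed
qed

lemma Xs_resolving:
  assumes n7: "n \<ge> 7"
  shows "nonlocal_resolving (wheel_V n) (wheel_E n) (Xs n)"
  unfolding nonlocal_resolving_def
proof (intro conjI ballI impI)
  show "Xs n \<subseteq> wheel_V n" using Xs_sub[OF n7] unfolding wheel_V_def by auto
  fix u v assume uV: "u \<in> wheel_V n" and vV: "v \<in> wheel_V n" and h: "u \<noteq> v \<and> \<not> wheel_E n u v"
  have u0: "u \<noteq> 0" using h vV unfolding wheel_E_def wheel_V_def by auto
  have v0: "v \<noteq> 0" using h uV unfolding wheel_E_def wheel_V_def by auto
  have un: "u \<le> n" "v \<le> n" using uV vV unfolding wheel_V_def by auto
  show "resolves (wheel_V n) (wheel_E n) (Xs n) u v"
  proof (cases "u < v")
    case True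
    then show ?thesis using resolve_lt[OF n7 _ True un(2)] u0 h by auto
  next
    case False
    then have vu: "v < u" using h by auto
    have ne: "\<not> wheel_E n v u" using h unfolding wheel_E_def by auto
    have "resolves (wheel_V n) (wheel_E n) (Xs n) v u" using resolve_lt[OF n7 _ vu un(1) ne] v0 by auto
    then show ?thesis unfolding resolves_def by metis
  qed
qed

theorem theorem4p1:
  fixes n :: nat
  assumes "n \<ge> 7"
  shows "nl_dim (wheel_V n) (wheel_E n) = (2 * n) div 5"
  unfolding nl_dim_def
proof (rule Least_equality)
  have "finite (Xs n)" using Xs_sub[OF assms] finite_subset by blast
  then show "\<exists>X. nonlocal_resolving (wheel_V n) (wheel_E n) X \<and> finite X \<and> card X = 2 * n div 5"
    using Xs_resolving[OF assms] card_Xs[OF assms] by blast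
next
  fix k assume "\<exists>X. nonlocal_resolving (wheel_V n) (wheel_E n) X \<and> finite X \<and> card X = k"
  then obtain X where "nonlocal_resolving (wheel_V n) (wheel_E n) X" "finite X" "card X = k" by blast
  then show "2 * n div 5 \<le> k" using lower[OF assms] by blast
qed

end
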